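(* Let $K\subseteq\mathbb{R}^n$ be a closed convex set of dimension at least $2$, and let $O\in\partial K$. Then $\mathrm{CR}(O)\geq \mathrm{LCD}(O)$.
   Context: For $r>0$, $S_r(O)\subseteq\mathbb{R}^n$ denotes the Euclidean sphere of radius $r$ centered at $O$. The connectivity radius $\mathrm{CR}(O)$ is the supremum of all $\epsilon$ such that for every $0<r<\epsilon$ the intersection $S_r(O)\cap K$ is connected. A point $P\in\partial K\setminus\{O\}$ is called $O$-critical if $\langle O-P, X-P\rangle\geq 0$ for all $X\in K$ (equivalently, the affine hyperplane through $P$ orthogonal to the segment $OP$ is a supporting hyperplane of $K$). The least critical distance $\mathrm{LCD}(O)$ is the infimum of $|OP|$ over all $O$-critical points $P\in\partial K$. *)

theory Defs
  imports "HOL-Analysis.Analysis"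
begin

definition conn_radius :: "'a::euclidean_space set \<Rightarrow> 'a \<Rightarrow> ereal" where
  "conn_radius K O0 = Sup {ereal \<epsilon> | \<epsilon>::real.
      \<forall>r. 0 < r \<and> r < \<epsilon> \<longrightarrow> connected (sphere O0 r \<inter> K)}"

definition critical_point :: "'a::euclidean_space set \<Rightarrow> 'a \<Rightarrow> 'a \<Rightarrow> bool" where
  "critical_point K O0 P \<longleftrightarrow> P \<in> frontier K \<and> P \<noteq> O0 \<and>
      (\<forall>X\<in>K. inner (O0 - P) (X - P) \<ge> 0)"

text \<open>Least critical distance (infimum over the empty set is +\<infinity>).\<close>
definition least_crit_dist :: "'a::euclidean_space set \<Rightarrow> 'a \<Rightarrow> ereal" where
  "least_crit_dist K O0 = Inf {ereal (dist O0 P) | P. critical_point K O0 P}"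

end

theory Submission imports Defs begin

lemma seg_bound:
  fixes v u :: "'a::euclidean_space"
  assumes nv: "norm v = R" and nu: "norm u = s" and s: "0 < s" "s \<le> R"
    and iv: "inner v u \<ge> - \<kappa>" and k: "0 \<le> \<kappa>" "\<kappa> < R * s" and t: "0 \<le> t" "t \<le> 1"
  shows "(1 - \<kappa> / (R * s)) * s\<^sup>2 / 4 \<le> (norm ((1 - t) *\<^sub>R v + t *\<^sub>R u))\<^sup>2"
proof -
  define a where "a = (1 - t) * R"
  define b where "b = t * s"
  define l where "l = \<kappa> / (R * s)"
  have Rs: "R * s > 0" using s by simp
  have l: "0 \<le> l" "l < 1" using k Rs by (auto simp: l_def field_simps)
  have ab: "a \<ge> 0" "b \<ge> 0" using t s by (auto simp: a_def b_def)
  have eq: "(norm ((1 - t) *\<^sub>R v + t *\<^sub>R u))\<^sup>2 = a\<^sup>2 + b\<^sup>2 + 2 * (1 - t) * t * inner v u"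
  proof -
    have "(norm ((1 - t) *\<^sub>R v + t *\<^sub>R u))\<^sup>2 = inner ((1 - t) *\<^sub>R v + t *\<^sub>R u) ((1 - t) *\<^sub>R v + t *\<^sub>R u)"
      by (simp add: power2_norm_eq_inner)
    also have "\<dots> = (1-t)*(1-t) * inner v v + t * t * inner u u + 2 * (1 - t) * t * inner v u"
      by (simp add: inner_add_left inner_add_right inner_commute algebra_simps)
    also have "inner v v = R * R" using nv by (metis norm_eq_sqrt_inner real_sqrt_mult_self inner_ge_zero power2_eq_square real_sqrt_pow2 power2_norm_eq_inner)
    also have "inner u u = s * s" using nu by (metis power2_norm_eq_inner power2_eq_square)
    finally show ?thesis by (simp add: a_def b_def power2_eq_square algebra_simps)
  qed
  have "2 * (1 - t) * t * inner v u \<ge> 2 * (1 - t) * t * (- \<kappa>)"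
    using t iv by (intro mult_left_mono) auto
  moreover have "2 * (1 - t) * t * (- \<kappa>) = - 2 * l * a * b"
  proof -
    have "R * s \<noteq> 0" using Rs by linarith
    then have "l * (R * s) = \<kappa>" unfolding l_def by simp
    then have k: "\<kappa> = l * (R * s)" by simp
    show ?thesis unfolding a_def b_def k by (simp add: algebra_simps)
  qed
  ultimately have "(norm ((1 - t) *\<^sub>R v + t *\<^sub>R u))\<^sup>2 \<ge> a\<^sup>2 + b\<^sup>2 - 2 * l * a * b"
    using eq by linarith
  moreover have "a\<^sup>2 + b\<^sup>2 - 2 * l * a * b \<ge> (1 - l) * (a\<^sup>2 + b\<^sup>2)"
  proof -
    have "a\<^sup>2 + b\<^sup>2 - 2 * l * a * b - (1 - l) * (a\<^sup>2 + b\<^sup>2) = l * (a - b)\<^sup>2"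
      by (simp add: power2_eq_square algebra_simps)
    moreover have "l * (a - b)\<^sup>2 \<ge> 0" using l by simp
    ultimately show ?thesis by linarith
  qed
  moreover have "a\<^sup>2 + b\<^sup>2 \<ge> s\<^sup>2 / 4"
  proof (cases "t \<le> 1/2")
    case True
    then have "(1 - t) * R \<ge> (1/2) * R" using s by (intro mult_right_mono) auto
    then have "a \<ge> s / 2" using s unfolding a_def by linarith
    then have "a\<^sup>2 \<ge> (s/2)\<^sup>2" using s by (intro power_mono) auto
    moreover have "(s/2)\<^sup>2 = s\<^sup>2/4" by (simp add: power_divide)
    ultimately show ?thesis using zero_le_power2[of b] by linarith
  next
    case False
    then have "t * s \<ge> (1/2) * s" using s by (intro mult_right_mono) auto
    then have "b \<ge> s / 2" using s unfolding b_def by linarith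
    then have "b\<^sup>2 \<ge> (s/2)\<^sup>2" using s by (intro power_mono) auto
    moreover have "(s/2)\<^sup>2 = s\<^sup>2/4" by (simp add: power_divide)
    ultimately show ?thesis using zero_le_power2[of a] by linarith
  qed
  then have "(1 - l) * (a\<^sup>2 + b\<^sup>2) \<ge> (1 - l) * (s\<^sup>2 / 4)" using l by (intro mult_left_mono) auto
  ultimately have "(1 - l) * (s\<^sup>2 / 4) \<le> (norm ((1 - t) *\<^sub>R v + t *\<^sub>R u))\<^sup>2" by linarith
  then show ?thesis by (simp add: l_def)
qed

lemma clip_props:
  fixes O0 q :: "'a::euclidean_space"
  assumes "r > 0"
  shows "dist (O0 + (r / max r (dist q O0)) *\<^sub>R (q - O0)) O0 = min (dist q O0) r"
    and "convex K \<Longrightarrow> O0 \<in> K \<Longrightarrow> q \<in> K \<Longrightarrow> O0 + (r / max r (dist q O0)) *\<^sub>R (q - O0) \<in> K"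
proof -
  have "dist (O0 + (r / max r (dist q O0)) *\<^sub>R (q - O0)) O0 = (r / max r (dist q O0)) * dist q O0"
    using assms by (simp add: dist_norm)
  also have "\<dots> = min (dist q O0) r" using assms by (auto simp: max_def min_def)
  finally show "dist (O0 + (r / max r (dist q O0)) *\<^sub>R (q - O0)) O0 = min (dist q O0) r" .
  assume K: "convex K" "O0 \<in> K" "q \<in> K"
  define l where "l = r / max r (dist q O0)"
  have l: "0 \<le> l" "l \<le> 1" using assms by (auto simp: l_def max_def divide_le_eq_1)
  have "(1 - l) *\<^sub>R O0 + l *\<^sub>R q \<in> K" using convexD_alt[OF K l] .
  moreover have "(1 - l) *\<^sub>R O0 + l *\<^sub>R q = O0 + l *\<^sub>R (q - O0)" by (simp add: algebra_simps)
  ultimately show "O0 + (r / max r (dist q O0)) *\<^sub>R (q - O0) \<in> K" by (simp add: l_def)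
qed

lemma T_props:
  fixes K :: "'a::euclidean_space set" and O0 :: 'a
  assumes K: "closed K" "convex K" and p: "p \<in> K" and t: "t \<ge> 0"
  defines "q \<equiv> closest_point K (p + t *\<^sub>R (p - O0))"
  shows "dist q O0 \<ge> dist p O0"
    and "q \<noteq> p \<Longrightarrow> dist q O0 > dist p O0"
    and "q = p \<Longrightarrow> t > 0 \<Longrightarrow> \<forall>X\<in>K. inner (O0 - p) (X - p) \<ge> 0"
proof -
  define Y where "Y = p + t *\<^sub>R (p - O0)"
  have YO: "dist Y O0 = (1 + t) * dist p O0"
  proof -
    have "Y - O0 = (1 + t) *\<^sub>R (p - O0)" by (simp add: Y_def algebra_simps)
    then show ?thesis using t by (simp add: dist_norm)
  qed
  have Yp: "dist Y p = t * dist p O0"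
    using t by (simp add: Y_def dist_norm)
  have tri: "dist Y O0 \<le> dist Y q + dist q O0" by (rule dist_triangle)
  show lt: "dist q O0 > dist p O0" if "q \<noteq> p"
  proof -
    have "dist Y q < dist Y p"
      using closest_point_lt[OF K(2,1) p, of Y] that by (simp add: q_def Y_def)
    then show ?thesis using YO Yp tri by (simp add: algebra_simps)
  qed
  show "dist q O0 \<ge> dist p O0"
    using lt by (cases "q = p") auto
  assume qp: "q = p" and tp: "t > 0"
  show "\<forall>X\<in>K. inner (O0 - p) (X - p) \<ge> 0"
  proof
    fix X assume X: "X \<in> K"
    have "inner (Y - q) (X - q) \<le> 0"
      using closest_point_dot[OF K(2,1) X, of Y] by (simp add: q_def Y_def)
    then have "t * inner (p - O0) (X - p) \<le> 0" using qp by (simp add: Y_def)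
    then have "inner (p - O0) (X - p) \<le> 0" using tp by (simp add: mult_le_0_iff)
    then show "inner (O0 - p) (X - p) \<ge> 0"
      by (metis inner_minus_left minus_diff_eq neg_0_le_iff_le)
  qed
qed

lemma core:
  fixes K :: "'a::euclidean_space set" and O0 :: 'a
  assumes K: "closed K" "convex K" "O0 \<in> K" and r: "r > 0"
    and nocrit: "\<And>P. P \<in> K \<Longrightarrow> 0 < dist P O0 \<Longrightarrow> dist P O0 < r \<Longrightarrow> \<not> (\<forall>X\<in>K. inner (O0 - P) (X - P) \<ge> 0)"
    and G: "connected G" "G \<subseteq> K \<inter> cball O0 r" "K \<inter> sphere O0 r \<subseteq> G"
    and eps: "\<epsilon> > 0" "\<And>g. g \<in> G \<Longrightarrow> \<epsilon> \<le> dist g O0"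
  shows "connected (K \<inter> sphere O0 r)"
proof -
  define B where "B = K \<inter> cball O0 r"
  define A where "A = K \<inter> sphere O0 r"
  define T where "T = (\<lambda>p. closest_point K (p + (r - dist p O0) *\<^sub>R (p - O0)))"
  define C where "C = (\<lambda>q. O0 + (r / max r (dist q O0)) *\<^sub>R (q - O0))"
  define M where "M = (\<lambda>p. C (T p))"
  have Kne: "K \<noteq> {}" using K by auto
  have contT: "continuous_on UNIV T"
    unfolding T_def
    by (rule continuous_on_compose2[OF continuous_on_closest_point[OF K(2,1) Kne]])
       (auto intro!: continuous_intros)
  have contC: "continuous_on UNIV C"
    unfolding C_def using r by (auto intro!: continuous_intros)
  have contM: "continuous_on UNIV M"
    unfolding M_def by (rule continuous_on_compose2[OF contC contT]) auto
  have TK: "T p \<in> K" for p unfolding T_def using closest_point_in_set[OF K(1) Kne] .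
  have distB: "p \<in> B \<longleftrightarrow> p \<in> K \<and> dist p O0 \<le> r" for p
    by (auto simp: B_def dist_commute)
  have distA: "p \<in> A \<longleftrightarrow> p \<in> K \<and> dist p O0 = r" for p
    by (auto simp: A_def dist_commute)
  have MB: "M p \<in> B" for p
  proof -
    have "M p \<in> K" unfolding M_def C_def using clip_props(2)[OF r K(2,3) TK] .
    moreover have "dist (M p) O0 \<le> r" unfolding M_def C_def using clip_props(1)[OF r, of O0 "T p"] by simp
    ultimately show ?thesis using distB by auto
  qed
  have Mdist: "dist (M p) O0 = min (dist (T p) O0) r" for p
    unfolding M_def C_def by (rule clip_props(1)[OF r])
  have Mmono: "dist (M p) O0 \<ge> dist p O0" if "p \<in> B" for p
  proof -
    have "dist (T p) O0 \<ge> dist p O0"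
      unfolding T_def using that distB by (intro T_props(1)[OF K(1,2)]) auto
    then show ?thesis using Mdist that distB by auto
  qed
  have Mstrict: "dist (M p) O0 > dist p O0" if "p \<in> B" "0 < dist p O0" "dist p O0 < r" for p
  proof -
    have pK: "p \<in> K" using that distB by auto
    have tpos: "r - dist p O0 > 0" using that by simp
    have "T p \<noteq> p"
    proof
      assume "T p = p"
      then have "\<forall>X\<in>K. inner (O0 - p) (X - p) \<ge> 0"
        unfolding T_def using T_props(3)[OF K(1,2) pK, of "r - dist p O0" O0] tpos by simp
      then show False using nocrit[OF pK that(2,3)] by simp
    qed
    then have "dist (T p) O0 > dist p O0"
      unfolding T_def using T_props(2)[OF K(1,2) pK, of "r - dist p O0" O0] tpos by simp
    then show ?thesis using Mdist that by auto
  qed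
  have Mfix: "M p = p" if "p \<in> A" for p
  proof -
    have "T p = p" unfolding T_def using that distA closest_point_self[of p K] by auto
    then show ?thesis unfolding M_def C_def using that distA r by simp
  qed
  have iterB: "(M ^^ n) p \<in> B" if "p \<in> B" for n p
    using that MB by (cases n) auto
  have itercont: "continuous_on UNIV (M ^^ n)" for n
  proof (induction n)
    case 0 then show ?case by (simp add: continuous_on_id)
  next
    case (Suc n)
    then show ?case
      by (simp only: funpow.simps) (rule continuous_on_compose[OF Suc continuous_on_subset[OF contM]], auto)
  qed
  have itermono: "dist ((M ^^ n) p) O0 \<ge> dist p O0" if "p \<in> B" for n p
  proof (induction n)
    case 0 then show ?case by simp
  next
    case (Suc n)
    then show ?case using Mmono[OF iterB[OF that, of n]] by simp
  qed
  have iterfix: "(M ^^ n) p = p" if "p \<in> A" for n p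
    by (induction n) (use Mfix that in auto)
  have unif: "\<exists>N. \<forall>n\<ge>N. \<forall>g\<in>G. dist ((M ^^ n) g) O0 \<ge> r - \<eta>" if eta: "\<eta> > 0" for \<eta>
  proof -
    define Q where "Q = B \<inter> (- ball O0 \<epsilon>) \<inter> cball O0 (r - \<eta>)"
    have Qiff: "p \<in> Q \<longleftrightarrow> p \<in> B \<and> \<epsilon> \<le> dist p O0 \<and> dist p O0 \<le> r - \<eta>" for p
      by (auto simp: Q_def dist_commute)
    have "compact B" unfolding B_def using K(1) by (intro closed_Int_compact) auto
    then have cQ: "compact Q" unfolding Q_def
      by (intro compact_Int_closed) auto
    obtain c where c: "c > 0" "\<And>p. p \<in> Q \<Longrightarrow> dist (M p) O0 \<ge> dist p O0 + c"
    proof (cases "Q = {}")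
      case True then show ?thesis using that[of 1] by auto
    next
      case False
      have "continuous_on Q (\<lambda>p. dist (M p) O0 - dist p O0)"
        by (intro continuous_intros continuous_on_compose2[OF contM]) auto
      then obtain x0 where x0: "x0 \<in> Q" "\<And>y. y \<in> Q \<Longrightarrow> dist (M x0) O0 - dist x0 O0 \<le> dist (M y) O0 - dist y O0"
        using continuous_attains_inf[OF cQ False] by blast
      have "dist (M x0) O0 - dist x0 O0 > 0"
        using Mstrict[of x0] x0(1) Qiff eps eta by force
      then show ?thesis using that[of "dist (M x0) O0 - dist x0 O0"] x0 by force
    qed
    have claim: "dist ((M ^^ n) g) O0 \<ge> min (r - \<eta>) (\<epsilon> + real n * c)" if g: "g \<in> G" for n g
    proof (induction n)
      case 0 then show ?case using eps(2)[OF g] by simp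
    next
      case (Suc n)
      define p where "p = (M ^^ n) g"
      have gB: "g \<in> B" using g G unfolding B_def by auto
      have pB: "p \<in> B" unfolding p_def using iterB[OF gB] .
      have pe: "dist p O0 \<ge> \<epsilon>" unfolding p_def using itermono[OF gB, of n] eps(2)[OF g] by simp
      have eqS: "(M ^^ Suc n) g = M p" by (simp add: p_def)
      show ?case
      proof (cases "dist p O0 \<le> r - \<eta>")
        case True
        then have "p \<in> Q" using Qiff pB pe by auto
        then have "dist (M p) O0 \<ge> dist p O0 + c" using c by auto
        moreover have "dist p O0 \<ge> min (r - \<eta>) (\<epsilon> + real n * c)" using Suc p_def by simp
        moreover have "real (Suc n) * c = real n * c + c" by (simp add: algebra_simps)
        ultimately show ?thesis unfolding eqS using True c(1) by (smt (verit))
      next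
        case False
        then show ?thesis unfolding eqS using Mmono[OF pB] by auto
      qed
    qed
    obtain N :: nat where N: "real N > (r - \<eta>) / c" using reals_Archimedean2 by blast
    have "real N * c > r - \<eta>" using N c by (simp add: field_simps)
    show ?thesis
    proof (intro exI allI impI ballI)
      fix n g assume n: "N \<le> n" and g: "g \<in> G"
      have "real n * c \<ge> real N * c" using n c by (intro mult_right_mono) auto
      then have "\<epsilon> + real n * c \<ge> r - \<eta>" using \<open>real N * c > r - \<eta>\<close> eps by linarith
      then show "dist ((M ^^ n) g) O0 \<ge> r - \<eta>" using claim[OF g, of n] by simp
    qed
  qed
  show ?thesis
  proof (cases "A = {}")
    case True then show ?thesis by (simp add: A_def)
  next
    case Ane: False
    define S where "S = (\<lambda>k::nat. closure (\<Union>n\<in>{k..}. (M ^^ n) ` G))"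
    have GB: "G \<subseteq> B" using G unfolding B_def by auto
    have cB: "closed B" unfolding B_def using K(1) by auto
    have UB: "(\<Union>n\<in>{k..}. (M ^^ n) ` G) \<subseteq> B" for k using iterB GB by auto
    have SB: "S k \<subseteq> B" for k unfolding S_def using closure_minimal[OF UB cB] .
    have bB: "bounded B" unfolding B_def by (rule bounded_subset[OF bounded_cball]) auto
    have AS: "A \<subseteq> (M ^^ n) ` G" for n
    proof
      fix a assume "a \<in> A"
      then show "a \<in> (M ^^ n) ` G" using iterfix[of a n] G(3) unfolding A_def by (metis image_eqI subsetD)
    qed
    have compS: "compact (S k)" for k
      unfolding S_def by (rule compact_closure[THEN iffD2], rule bounded_subset[OF bB UB])
    have connS: "connected (S k)" for k
    proof -
      have "connected (\<Union>n\<in>{k..}. (M ^^ n) ` G)"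
      proof (rule connected_Union)
        show "connected s" if "s \<in> (\<lambda>n. (M ^^ n) ` G) ` {k..}" for s
          using that G(1) by (auto intro!: connected_continuous_image continuous_on_subset[OF itercont])
        show "\<Inter> ((\<lambda>n. (M ^^ n) ` G) ` {k..}) \<noteq> {}" using AS Ane by blast
      qed
      then show ?thesis unfolding S_def by (rule connected_imp_connected_closure)
    qed
    have Smono: "k \<le> k' \<Longrightarrow> S k' \<subseteq> S k" for k k'
      unfolding S_def by (intro closure_mono UN_mono) auto
    have "connected (\<Inter> (range S))"
    proof (rule connected_chain)
      show "\<And>X. X \<in> range S \<Longrightarrow> compact X \<and> connected X" using compS connS by blast
      fix X Y assume "X \<in> range S \<and> Y \<in> range S"
      then obtain k k' where XY: "X = S k" "Y = S k'" by auto
      show "X \<subseteq> Y \<or> Y \<subseteq> X"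
      proof (cases "k \<le> k'")
        case True then show ?thesis using Smono[OF True] XY by simp
      next
        case False then have "k' \<le> k" by simp
        then show ?thesis using Smono XY by simp
      qed
    qed
    moreover have "\<Inter> (range S) = A"
    proof
      show "A \<subseteq> \<Inter> (range S)"
      proof
        fix a assume a: "a \<in> A"
        show "a \<in> \<Inter> (range S)"
        proof
          fix k :: nat
          have "a \<in> (\<Union>n\<in>{k..}. (M ^^ n) ` G)" using AS a by blast
          then show "a \<in> S k" unfolding S_def by (rule closure_subset[THEN subsetD])
        qed
      qed
      show "\<Inter> (range S) \<subseteq> A"
      proof
        fix x assume x: "x \<in> \<Inter> (range S)"
        have "x \<in> S 0" using x by simp
        then have xB: "x \<in> B" using SB by blast
        have "dist x O0 \<ge> r - \<eta>" if eta: "\<eta> > 0" for \<eta>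
        proof -
          obtain N where N: "\<forall>n\<ge>N. \<forall>g\<in>G. dist ((M ^^ n) g) O0 \<ge> r - \<eta>" using unif[OF eta] by blast
          have "(\<Union>n\<in>{N..}. (M ^^ n) ` G) \<subseteq> - ball O0 (r - \<eta>)"
            using N by (force simp: dist_commute)
          then have "S N \<subseteq> - ball O0 (r - \<eta>)" unfolding S_def
            by (intro closure_minimal) auto
          moreover have "x \<in> S N" using x by simp
          ultimately have "x \<notin> ball O0 (r - \<eta>)" by blast
          then show ?thesis by (simp add: dist_commute)
        qed
        then have "r \<le> dist x O0 + \<eta>" if "\<eta> > 0" for \<eta> using that by force
        then have "dist x O0 \<ge> r"
          by (rule field_le_epsilon)
        then show "x \<in> A" using xB distA distB by auto
      qed
    qed
    ultimately show ?thesis by (simp add: A_def)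
  qed
qed

lemma seg_point:
  fixes a c g O0 :: "'a::euclidean_space"
  assumes "g \<in> closed_segment a c"
  obtains t where "0 \<le> t" "t \<le> 1" "g - O0 = (1 - t) *\<^sub>R (a - O0) + t *\<^sub>R (c - O0)"
proof -
  obtain t where t: "0 \<le> t" "t \<le> 1" "g = (1 - t) *\<^sub>R a + t *\<^sub>R c"
    using assms unfolding closed_segment_def by blast
  have "g - O0 = (1 - t) *\<^sub>R (a - O0) + t *\<^sub>R (c - O0)"
    unfolding t(3) by (simp add: algebra_simps)
  then show ?thesis using that t by blast
qed

lemma sqrt_le_norm:
  fixes x :: "'a::real_normed_vector"
  assumes "e \<le> (norm x)\<^sup>2"
  shows "sqrt e \<le> norm x"
proof -
  have "sqrt e \<le> sqrt ((norm x)\<^sup>2)" using assms by (rule real_sqrt_le_mono)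
  then show ?thesis by simp
qed

lemma gamma_exists:
  fixes K :: "'a::euclidean_space set" and O0 :: 'a
  assumes K: "convex K" "O0 \<in> K" and r: "r > 0" and dim: "aff_dim K \<ge> 2"
  shows "\<exists>G \<epsilon>. connected G \<and> G \<subseteq> K \<inter> cball O0 r \<and> K \<inter> sphere O0 r \<subseteq> G \<and> \<epsilon> > 0 \<and> (\<forall>g\<in>G. \<epsilon> \<le> dist g O0)"
proof -
  define D where "D = (+) (- O0) ` K"
  have "aff_dim K = int (dim D)" unfolding D_def by (rule aff_dim_eq_dim) (simp add: K(2) hull_inc)
  then have dD: "dim D \<ge> 2" using dim by simp
  have Dmem: "x \<in> D \<Longrightarrow> O0 + x \<in> K" for x
    unfolding D_def by (auto simp: algebra_simps)
  obtain v where v: "v \<in> D" "v \<noteq> 0"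
  proof -
    have "\<not> D \<subseteq> {0}"
    proof
      assume "D \<subseteq> {0}"
      then have "dim D \<le> dim {0::'a}" by (rule dim_subset)
      moreover have "dim {0::'a} = 0" by simp
      ultimately show False using dD by linarith
    qed
    then show ?thesis using that by blast
  qed
  obtain w where w: "w \<in> D" "w \<notin> span {v}"
  proof -
    have "\<not> D \<subseteq> span {v}"
    proof
      assume "D \<subseteq> span {v}"
      then have "dim D \<le> dim (span {v})" by (rule dim_subset)
      moreover have "dim (span {v}) = 1" using v by simp
      ultimately show False using dD by linarith
    qed
    then show ?thesis using that by blast
  qed
  have w0: "w \<noteq> 0" using w span_zero by auto
  define s where "s = min r (min (norm v) (norm w))"
  have s: "s > 0" "s \<le> r" "s \<le> norm v" "s \<le> norm w" using r v w0 by (auto simp: s_def)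
  define u1 where "u1 = (s / norm v) *\<^sub>R v"
  define u2 where "u2 = (s / norm w) *\<^sub>R w"
  have nu: "norm u1 = s" "norm u2 = s" using s v w0 by (auto simp: u1_def u2_def)
  have inK: "O0 + (l *\<^sub>R x) \<in> K" if "O0 + x \<in> K" "0 \<le> l" "l \<le> 1" for x l
  proof -
    have "(1 - l) *\<^sub>R O0 + l *\<^sub>R (O0 + x) \<in> K" using convexD_alt[OF K(1) K(2) that(1) that(2,3)] .
    moreover have "(1 - l) *\<^sub>R O0 + l *\<^sub>R (O0 + x) = O0 + l *\<^sub>R x" by (simp add: algebra_simps)
    ultimately show ?thesis by simp
  qed
  define c1 where "c1 = O0 + u1"
  define c2 where "c2 = O0 + u2"
  have c1K: "c1 \<in> K" unfolding c1_def u1_def using inK[OF Dmem[OF v(1)], of "s / norm v"] s v by auto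
  have c2K: "c2 \<in> K" unfolding c2_def u2_def using inK[OF Dmem[OF w(1)], of "s / norm w"] s w0 by auto
  define \<kappa>0 where "\<kappa>0 = \<bar>inner u1 u2\<bar>"
  have k0: "\<kappa>0 < s * s"
  proof -
    have le: "\<kappa>0 \<le> norm u1 * norm u2" unfolding \<kappa>0_def by (rule Cauchy_Schwarz_ineq2)
    have "\<kappa>0 \<noteq> norm u1 * norm u2"
    proof
      assume "\<kappa>0 = norm u1 * norm u2"
      then have "norm u1 *\<^sub>R u2 = norm u2 *\<^sub>R u1 \<or> norm u1 *\<^sub>R u2 = - norm u2 *\<^sub>R u1"
        using norm_cauchy_schwarz_abs_eq[of u1 u2] by (simp add: \<kappa>0_def)
      then have "s *\<^sub>R u2 = s *\<^sub>R u1 \<or> s *\<^sub>R u2 = s *\<^sub>R (- u1)" using nu by simp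
      then have "u2 = u1 \<or> u2 = - u1" using s(1) by (simp only: scaleR_cancel_left) auto
      moreover have "u1 \<in> span {v}" unfolding u1_def by (intro span_mul span_base) simp
      ultimately have "u2 \<in> span {v}" using span_neg by auto
      moreover have "w = (norm w / s) *\<^sub>R u2" using s w0 by (simp add: u2_def)
      ultimately have "w \<in> span {v}" by (metis span_mul)
      then show False using w by simp
    qed
    then show ?thesis using le nu by simp
  qed
  have k0pos: "\<kappa>0 \<ge> 0" by (simp add: \<kappa>0_def)
  define \<kappa> where "\<kappa> = r * (norm (u1 + u2) / 2 + s) / 2"
  have n12: "norm (u1 + u2) < 2 * s"
  proof -
    have "(norm (u1 + u2))\<^sup>2 = inner u1 u1 + inner u2 u2 + 2 * inner u1 u2"
      by (simp add: power2_norm_eq_inner inner_add_left inner_add_right inner_commute)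
    also have "inner u1 u1 = s * s" using nu by (metis power2_norm_eq_inner power2_eq_square)
    also have "inner u2 u2 = s * s" using nu by (metis power2_norm_eq_inner power2_eq_square)
    finally have eq: "(norm (u1 + u2))\<^sup>2 = s * s + s * s + 2 * inner u1 u2" .
    have "inner u1 u2 \<le> \<kappa>0" unfolding \<kappa>0_def by (rule abs_ge_self)
    moreover have "(2 * s)\<^sup>2 = 4 * (s * s)" by (simp add: power2_eq_square)
    ultimately have "(norm (u1 + u2))\<^sup>2 < (2 * s)\<^sup>2" using eq k0 by linarith
    then show ?thesis by (rule power_less_imp_less_base) (use s in linarith)
  qed
  have kk: "0 \<le> \<kappa>" "\<kappa> < r * s" "r * norm (u1 + u2) \<le> 2 * \<kappa>"
  proof -
    show "0 \<le> \<kappa>" using r s by (simp add: \<kappa>_def)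
    have "norm (u1 + u2) / 2 + s < 2 * s" using n12 by simp
    then have "r * (norm (u1 + u2) / 2 + s) < r * (2 * s)" using r by (intro mult_strict_left_mono) auto
    then show "\<kappa> < r * s" by (simp add: \<kappa>_def)
    have "r * norm (u1 + u2) \<le> r * (norm (u1 + u2) / 2 + s) " using r n12
      by (intro mult_left_mono) auto
    then show "r * norm (u1 + u2) \<le> 2 * \<kappa>" by (simp add: \<kappa>_def)
  qed
  define A where "A = K \<inter> sphere O0 r"
  define A1 where "A1 = {a \<in> A. inner (a - O0) u1 \<ge> - \<kappa>}"
  define A2 where "A2 = {a \<in> A. inner (a - O0) u2 \<ge> - \<kappa>}"
  have Acov: "A \<subseteq> A1 \<union> A2"
  proof
    fix a assume a: "a \<in> A"
    show "a \<in> A1 \<union> A2"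
    proof (rule ccontr)
      assume "a \<notin> A1 \<union> A2"
      then have "inner (a - O0) u1 < - \<kappa>" "inner (a - O0) u2 < - \<kappa>" using a by (auto simp: A1_def A2_def)
      then have "inner (a - O0) (u1 + u2) < - 2 * \<kappa>" by (simp add: inner_add_right)
      moreover have na: "norm (a - O0) = r" using a by (simp add: A_def dist_norm norm_minus_commute)
      moreover have "- inner (a - O0) (u1 + u2) \<le> r * norm (u1 + u2)"
        using abs_le_D2[OF Cauchy_Schwarz_ineq2[of "a - O0" "u1 + u2"]] na by simp
      ultimately show False using kk(3) by linarith
    qed
  qed
  define G1 where "G1 = \<Union>(insert (closed_segment c1 c2) ((\<lambda>a. closed_segment a c1) ` A1))"
  define G2 where "G2 = \<Union>(insert (closed_segment c1 c2) ((\<lambda>a. closed_segment a c2) ` A2))"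
  have cG1: "connected G1" unfolding G1_def
  proof (rule connected_Union)
    show "connected S" if "S \<in> insert (closed_segment c1 c2) ((\<lambda>a. closed_segment a c1) ` A1)" for S
      using that by auto
    have "c1 \<in> \<Inter>(insert (closed_segment c1 c2) ((\<lambda>a. closed_segment a c1) ` A1))" by auto
    then show "\<Inter>(insert (closed_segment c1 c2) ((\<lambda>a. closed_segment a c1) ` A1)) \<noteq> {}" by blast
  qed
  have cG2: "connected G2" unfolding G2_def
  proof (rule connected_Union)
    show "connected S" if "S \<in> insert (closed_segment c1 c2) ((\<lambda>a. closed_segment a c2) ` A2)" for S
      using that by auto
    have "c2 \<in> \<Inter>(insert (closed_segment c1 c2) ((\<lambda>a. closed_segment a c2) ` A2))" by auto
    then show "\<Inter>(insert (closed_segment c1 c2) ((\<lambda>a. closed_segment a c2) ` A2)) \<noteq> {}" by blast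
  qed
  have c1G: "c1 \<in> G1 \<inter> G2" by (auto simp: G1_def G2_def)
  have cG: "connected (G1 \<union> G2)" using connected_Un[OF cG1 cG2] c1G by blast
  define B where "B = K \<inter> cball O0 r"
  have cvB: "convex B" unfolding B_def using K(1) by (intro convex_Int convex_cball)
  have c1B: "c1 \<in> B" using c1K nu s by (simp add: B_def c1_def dist_norm)
  have c2B: "c2 \<in> B" using c2K nu s by (simp add: B_def c2_def dist_norm)
  have AB: "A \<subseteq> B" by (auto simp: A_def B_def)
  have GB: "G1 \<union> G2 \<subseteq> B"
    unfolding G1_def G2_def using closed_segment_subset[OF _ _ cvB] c1B c2B AB A1_def A2_def by auto
  have AG: "A \<subseteq> G1 \<union> G2"
  proof
    fix a assume "a \<in> A"
    then have "a \<in> A1 \<or> a \<in> A2" using Acov by auto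
    then show "a \<in> G1 \<union> G2" unfolding G1_def G2_def by auto
  qed
  define e1 where "e1 = (1 - \<kappa> / (r * s)) * s\<^sup>2 / 4"
  define e2 where "e2 = (1 - \<kappa>0 / (s * s)) * s\<^sup>2 / 4"
  have e1: "e1 > 0" using kk s r by (simp add: e1_def)
  have e2: "e2 > 0" using k0 s by (simp add: e2_def)
  have seg12: "min e1 e2 \<le> (norm (g - O0))\<^sup>2" if gs: "g \<in> closed_segment c1 c2" for g
  proof -
    obtain t where t: "0 \<le> t" "t \<le> 1" "g - O0 = (1 - t) *\<^sub>R (c1 - O0) + t *\<^sub>R (c2 - O0)"
      using seg_point[OF gs] by blast
    have "e2 \<le> (norm (g - O0))\<^sup>2" unfolding e2_def t(3) c1_def c2_def
      using seg_bound[of u1 s u2 s \<kappa>0 t] nu s k0 k0pos t abs_ge_minus_self[of "inner u1 u2"]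
      by (simp add: \<kappa>0_def)
    then show ?thesis by simp
  qed
  have segA: "min e1 e2 \<le> (norm (g - O0))\<^sup>2"
    if gs: "g \<in> closed_segment a (O0 + u)" and "a \<in> A" "inner (a - O0) u \<ge> - \<kappa>" "norm u = s" for g a u
  proof -
    obtain t where t: "0 \<le> t" "t \<le> 1" "g - O0 = (1 - t) *\<^sub>R (a - O0) + t *\<^sub>R ((O0 + u) - O0)"
      using seg_point[OF gs] by blast
    have na: "norm (a - O0) = r" using that(2) by (simp add: A_def dist_norm norm_minus_commute)
    have "e1 \<le> (norm (g - O0))\<^sup>2" unfolding e1_def t(3)
      using seg_bound[of "a - O0" r u s \<kappa> t] na that(3,4) s kk t by simp
    then show ?thesis by simp
  qed
  have bound: "sqrt (min e1 e2) \<le> dist g O0" if "g \<in> G1 \<union> G2" for g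
  proof -
    have "min e1 e2 \<le> (norm (g - O0))\<^sup>2"
      using that seg12 segA[of g _ u1] segA[of g _ u2] nu
      unfolding G1_def G2_def A1_def A2_def c1_def c2_def by auto
    then show ?thesis by (simp add: dist_norm sqrt_le_norm)
  qed
  show ?thesis
    using cG GB AG bound e1 e2 unfolding A_def B_def
    by (intro exI[of _ "G1 \<union> G2"] exI[of _ "sqrt (min e1 e2)"]) auto
qed

theorem mainTheorem1:
  fixes K :: "'a::euclidean_space set" and O0 :: 'a
  assumes "closed K" and "convex K" and "aff_dim K \<ge> 2" and "O0 \<in> frontier K"
  shows "conn_radius K O0 \<ge> least_crit_dist K O0"
proof -
  have OK: "O0 \<in> K" using assms(1,4) frontier_subset_closed by auto
  have conn: "connected (sphere O0 r \<inter> K)" if r: "0 < r" "ereal r < least_crit_dist K O0" for r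
  proof -
    obtain G \<epsilon> where G: "connected G" "G \<subseteq> K \<inter> cball O0 r" "K \<inter> sphere O0 r \<subseteq> G" "\<epsilon> > 0"
      "\<forall>g\<in>G. \<epsilon> \<le> dist g O0"
      using gamma_exists[OF assms(2) OK r(1) assms(3)] by blast
    have nocrit: "\<not> (\<forall>X\<in>K. inner (O0 - P) (X - P) \<ge> 0)"
      if P: "P \<in> K" "0 < dist P O0" "dist P O0 < r" for P
    proof
      assume all: "\<forall>X\<in>K. inner (O0 - P) (X - P) \<ge> 0"
      have "P \<notin> interior K"
      proof
        assume "P \<in> interior K"
        then obtain e where e: "e > 0" "ball P e \<subseteq> K" using mem_interior by blast
        define d where "d = dist P O0"
        have d: "d > 0" using P by (simp add: d_def)
        have nd: "norm (P - O0) = d" by (simp add: d_def dist_norm)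
        define X where "X = P + (e / 2 / d) *\<^sub>R (P - O0)"
        have "dist P X = e / 2" using d e nd by (simp add: X_def dist_norm)
        then have "X \<in> K" using e by auto
        have "inner (O0 - P) (X - P) = (e / 2 / d) * inner (O0 - P) (P - O0)"
          by (simp add: X_def)
        also have "inner (O0 - P) (P - O0) = - (d * d)"
          using nd by (metis inner_minus_left minus_diff_eq power2_eq_square power2_norm_eq_inner)
        finally have "inner (O0 - P) (X - P) = - (e / 2 / d) * (d * d)" by simp
        moreover have "(e / 2 / d) * (d * d) > 0" using d e by simp
        ultimately have "inner (O0 - P) (X - P) < 0" by linarith
        then show False using all \<open>X \<in> K\<close> by force
      qed
      then have "P \<in> frontier K" using P assms(1) by (simp add: frontier_def closure_closed)
      then have "critical_point K O0 P" using P all unfolding critical_point_def by auto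
      then have "least_crit_dist K O0 \<le> ereal (dist O0 P)"
        unfolding least_crit_dist_def by (intro Inf_lower) auto
      then have "ereal r < ereal (dist O0 P)" using r(2) by (rule order.strict_trans2[rotated])
      then show False using P by (simp add: dist_commute)
    qed
    have "connected (K \<inter> sphere O0 r)"
      by (rule core[OF assms(1,2) OK r(1) nocrit G(1,2,3) G(4)]) (use G(5) in auto)
    then show ?thesis by (simp add: Int_commute)
  qed
  define CR where "CR = conn_radius K O0"
  have mem: "ereal y \<le> CR" if y: "ereal y \<le> least_crit_dist K O0" for y
  proof -
    have "\<forall>r. 0 < r \<and> r < y \<longrightarrow> connected (sphere O0 r \<inter> K)"
    proof (intro allI impI)
      fix r assume "0 < r \<and> r < y"
      then have "0 < r" "ereal r < least_crit_dist K O0" using y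
        by (auto intro: less_le_trans[of "ereal r" "ereal y"])
      then show "connected (sphere O0 r \<inter> K)" by (rule conn)
    qed
    then show ?thesis unfolding CR_def conn_radius_def by (intro Sup_upper) auto
  qed
  show ?thesis
  proof (cases "least_crit_dist K O0")
    case (real y) then show ?thesis using mem[of y] by (simp add: CR_def)
  next
    case PInf
    then have all: "ereal y \<le> CR" for y using mem by simp
    have "CR = \<infinity>"
    proof (cases CR)
      case (real z) then show ?thesis using all[of "z + 1"] by simp
    next
      case PInf then show ?thesis .
    next
      case MInf then show ?thesis using all[of 0] by simp
    qed
    then show ?thesis by (simp add: CR_def)
  next
    case MInf then show ?thesis by simp
  qed
qed

end
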